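(* Let $\mathcal{D}$ be a Steiner $2$-design $S(2,k,v)$ that has a parallel class, and let $G_1$ be its $1$-block intersection graph $1$-$\mathrm{BIG}(\mathcal{D})$. If $G_1$ is silver, then $k^2 \mid v$.
   Context: A $2$-$(v,k,\lambda)$ design ($2<k<v$) is a pair $(V,\mathcal{B})$ where $V$ is a $v$-set and $\mathcal{B}$ is a collection of $k$-subsets of $V$ (blocks) such that every $2$-subset of $V$ lies in exactly $\lambda$ blocks; a Steiner $2$-design $S(2,k,v)$ is a $2$-$(v,k,1)$ design. A parallel class is a set of blocks partitioning $V$. For a design $\mathcal{D}$ and integer $i\ge 0$, the $i$-block intersection graph $i$-$\mathrm{BIG}(\mathcal{D})$ has the blocks as vertices, two blocks adjacent iff they intersect in exactly $i$ elements. An $\alpha$-set of a graph is a maximum independent set. Let $G$ be an $r$-regular graph and $c$ a proper $(r+1)$-coloring of $G$. A vertex $x$ is rainbow with respect to $c$ if every one of the $r+1$ colors appears on the closed neighborhood $N[x]=N(x)\cup\{x\}$. Given an $\alpha$-set $I$, $c$ is silver with respect to $I$ if every $x\in I$ is rainbow; $G$ is silver if it admits a silver coloring with respect to some $\alpha$-set. (The $1$-BIG of an $S(2,k,v)$ is regular, of degree $k(v-k)/(k-1)$.) *)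

theory Defs
  imports Main
begin

text \<open>A Steiner 2-design S(2,k,v) on point set V with block set B (v = card V).
  Since lambda = 1 and k > 2, blocks cannot be repeated, so B is a set of k-subsets.\<close>
definition steiner_2_design :: "'a set \<Rightarrow> 'a set set \<Rightarrow> nat \<Rightarrow> bool" where
  "steiner_2_design V B k \<longleftrightarrow>
     finite V \<and> 2 < k \<and> k < card V \<and>
     (\<forall>b\<in>B. b \<subseteq> V \<and> card b = k) \<and>
     (\<forall>x\<in>V. \<forall>y\<in>V. x \<noteq> y \<longrightarrow> card {b\<in>B. {x, y} \<subseteq> b} = 1)"

definition parallel_class :: "'a set \<Rightarrow> 'a set set \<Rightarrow> 'a set set \<Rightarrow> bool" where
  "parallel_class V B P \<longleftrightarrow>
     P \<subseteq> B \<and> \<Union>P = V \<and> (\<forall>b\<in>P. \<forall>c\<in>P. b \<noteq> c \<longrightarrow> b \<inter> c = {})"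

definition has_parallel_class :: "'a set \<Rightarrow> 'a set set \<Rightarrow> bool" where
  "has_parallel_class V B \<longleftrightarrow> (\<exists>P. parallel_class V B P)"

definition big_adj :: "nat \<Rightarrow> 'a set set \<Rightarrow> 'a set \<Rightarrow> 'a set \<Rightarrow> bool" where
  "big_adj i B b c \<longleftrightarrow> b \<in> B \<and> c \<in> B \<and> b \<noteq> c \<and> card (b \<inter> c) = i"

definition independent_set :: "'v set \<Rightarrow> ('v \<Rightarrow> 'v \<Rightarrow> bool) \<Rightarrow> 'v set \<Rightarrow> bool" where
  "independent_set Vg E I \<longleftrightarrow> I \<subseteq> Vg \<and> (\<forall>x\<in>I. \<forall>y\<in>I. \<not> E x y)"

definition alpha_set :: "'v set \<Rightarrow> ('v \<Rightarrow> 'v \<Rightarrow> bool) \<Rightarrow> 'v set \<Rightarrow> bool" where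
  "alpha_set Vg E I \<longleftrightarrow> independent_set Vg E I \<and>
     (\<forall>J. independent_set Vg E J \<longrightarrow> card J \<le> card I)"

definition regular_graph :: "'v set \<Rightarrow> ('v \<Rightarrow> 'v \<Rightarrow> bool) \<Rightarrow> nat \<Rightarrow> bool" where
  "regular_graph Vg E r \<longleftrightarrow> (\<forall>x\<in>Vg. card {y\<in>Vg. E x y} = r)"

definition closed_nbhd :: "'v set \<Rightarrow> ('v \<Rightarrow> 'v \<Rightarrow> bool) \<Rightarrow> 'v \<Rightarrow> 'v set" where
  "closed_nbhd Vg E x = {y\<in>Vg. E x y} \<union> {x}"

definition proper_coloring :: "'v set \<Rightarrow> ('v \<Rightarrow> 'v \<Rightarrow> bool) \<Rightarrow> nat \<Rightarrow> ('v \<Rightarrow> nat) \<Rightarrow> bool" where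
  "proper_coloring Vg E n c \<longleftrightarrow>
     (\<forall>x\<in>Vg. c x < n) \<and> (\<forall>x\<in>Vg. \<forall>y\<in>Vg. E x y \<longrightarrow> c x \<noteq> c y)"

definition rainbow :: "'v set \<Rightarrow> ('v \<Rightarrow> 'v \<Rightarrow> bool) \<Rightarrow> nat \<Rightarrow> ('v \<Rightarrow> nat) \<Rightarrow> 'v \<Rightarrow> bool" where
  "rainbow Vg E n c x \<longleftrightarrow> c ` closed_nbhd Vg E x = {..<n}"

definition silver :: "'v set \<Rightarrow> ('v \<Rightarrow> 'v \<Rightarrow> bool) \<Rightarrow> bool" where
  "silver Vg E \<longleftrightarrow> (\<exists>r. regular_graph Vg E r \<and>
     (\<exists>I c. alpha_set Vg E I \<and> proper_coloring Vg E (r + 1) c \<and>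
            (\<forall>x\<in>I. rainbow Vg E (r + 1) c x)))"

end

theory Submission
  imports Defs
begin

lemma two_elems:
  assumes "finite S" "2 \<le> card S"
  obtains p q where "p \<in> S" "q \<in> S" "p \<noteq> q"
proof -
  from assms have "card S > 0" by simp
  then obtain p where p: "p \<in> S" using assms(1) by (metis card_gt_0_iff ex_in_conv)
  have "card (S - {p}) \<ge> 1" using assms p by simp
  then obtain q where "q \<in> S - {p}" by (metis card.empty ex_in_conv not_one_le_zero)
  then show ?thesis using p that by blast
qed

theorem theorem1:
  fixes V :: "'a set" and B :: "'a set set" and k :: nat
  assumes "steiner_2_design V B k"
    and "has_parallel_class V B"
    and "silver B (big_adj 1 B)"
  shows "k ^ 2 dvd card V"
proof -
  define E where "E = big_adj 1 B"
  have finV: "finite V" and k2: "2 < k" and kv: "k < card V"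
    and blk: "\<And>b. b \<in> B \<Longrightarrow> b \<subseteq> V \<and> card b = k"
    and pair: "\<And>x y. x \<in> V \<Longrightarrow> y \<in> V \<Longrightarrow> x \<noteq> y \<Longrightarrow> card {b\<in>B. {x, y} \<subseteq> b} = 1"
    using assms(1) unfolding steiner_2_design_def by auto
  obtain P where P: "parallel_class V B P" using assms(2) has_parallel_class_def by blast
  obtain r I c where reg: "regular_graph B E r" and alI: "alpha_set B E I"
    and pc: "proper_coloring B E (r + 1) c" and rb: "\<forall>x\<in>I. rainbow B E (r + 1) c x"
    using assms(3) unfolding silver_def E_def by blast
  have blkV: "\<And>b. b \<in> B \<Longrightarrow> b \<subseteq> V" and blkc: "\<And>b. b \<in> B \<Longrightarrow> card b = k"
    using blk by auto
  have finB: "finite B"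
    by (rule finite_subset[of B "Pow V"]) (use blk finV in auto)
  have finb: "\<And>b. b \<in> B \<Longrightarrow> finite b" using blk finV finite_subset by blast
  have nonemp: "\<And>b. b \<in> B \<Longrightarrow> b \<noteq> {}" using blk k2 by fastforce
  have inter_le: "card (b \<inter> d) \<le> 1" if bd: "b \<in> B" "d \<in> B" "b \<noteq> d" for b d
  proof (rule ccontr)
    assume "\<not> card (b \<inter> d) \<le> 1"
    then have "2 \<le> card (b \<inter> d)" by simp
    then obtain p q where pq: "p \<in> b \<inter> d" "q \<in> b \<inter> d" "p \<noteq> q"
      using two_elems[of "b \<inter> d"] finb bd by blast
    have "p \<in> V" "q \<in> V" using pq blk bd by auto
    then have c1: "card {bb\<in>B. {p, q} \<subseteq> bb} = 1" using pair pq by auto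
    have "{b, d} \<subseteq> {bb\<in>B. {p, q} \<subseteq> bb}" using pq bd by auto
    moreover have "finite {bb\<in>B. {p, q} \<subseteq> bb}" using finB by simp
    ultimately have "card {b, d} \<le> 1" using c1 card_mono by metis
    then show False using bd by simp
  qed
  have adj_iff: "E b d \<longleftrightarrow> b \<in> B \<and> d \<in> B \<and> b \<noteq> d \<and> b \<inter> d \<noteq> {}" for b d
  proof
    assume "E b d" then show "b \<in> B \<and> d \<in> B \<and> b \<noteq> d \<and> b \<inter> d \<noteq> {}"
      unfolding E_def big_adj_def by auto
  next
    assume h: "b \<in> B \<and> d \<in> B \<and> b \<noteq> d \<and> b \<inter> d \<noteq> {}"
    then have "card (b \<inter> d) \<le> 1" using inter_le by blast
    moreover have "card (b \<inter> d) \<noteq> 0" using h finb by auto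
    ultimately show "E b d" using h unfolding E_def big_adj_def by simp
  qed
  have disj_card: "card (\<Union>J) = k * card J"
    if J: "J \<subseteq> B" "\<And>y z. y \<in> J \<Longrightarrow> z \<in> J \<Longrightarrow> y \<noteq> z \<Longrightarrow> y \<inter> z = {}" for J
  proof -
    have "card (\<Union>J) = sum card J"
      by (rule card_Union_disjoint) (use J finb in \<open>auto simp: pairwise_def disjnt_def\<close>)
    also have "\<dots> = sum (\<lambda>_. k) J" using J blk by (intro sum.cong) auto
    finally show ?thesis by simp
  qed
  have indep_le: "k * card J \<le> card V" if "independent_set B E J" for J
  proof -
    have J: "J \<subseteq> B" "\<And>y z. y \<in> J \<Longrightarrow> z \<in> J \<Longrightarrow> y \<noteq> z \<Longrightarrow> y \<inter> z = {}"
      using that unfolding independent_set_def by (auto simp: adj_iff)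
    have "\<Union>J \<subseteq> V" using J blkV by (meson Union_least subsetD)
    then have "card (\<Union>J) \<le> card V" using finV card_mono by blast
    then show ?thesis using disj_card[OF J] by simp
  qed
  define n where "n = card P"
  have Pind: "independent_set B E P"
    using P unfolding parallel_class_def independent_set_def by (auto simp: adj_iff)
  have vn: "card V = k * n"
    using disj_card[of P] P unfolding parallel_class_def n_def by auto
  have Iind: "independent_set B E I" using alI unfolding alpha_set_def by simp
  have IB: "I \<subseteq> B" using Iind unfolding independent_set_def by simp
  have Idisj: "\<And>y z. y \<in> I \<Longrightarrow> z \<in> I \<Longrightarrow> y \<noteq> z \<Longrightarrow> y \<inter> z = {}"
    using Iind unfolding independent_set_def by (auto simp: adj_iff)
  have "card P \<le> card I" using alI Pind unfolding alpha_set_def by blast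
  moreover have "k * card I \<le> k * n" using indep_le[OF Iind] vn by simp
  ultimately have cI: "card I = n" using k2 n_def by simp
  have finI: "finite I" using IB finB finite_subset by blast
  have UI: "\<Union>I = V"
  proof (rule card_subset_eq[OF finV])
    show "\<Union>I \<subseteq> V" using IB blkV by (meson Union_least subsetD)
    show "card (\<Union>I) = card V" using disj_card[OF IB Idisj] cI vn by simp
  qed
  have n2: "n \<ge> 2"
  proof (rule ccontr)
    assume "\<not> n \<ge> 2" then have "n \<le> 1" by simp
    then have "k * n \<le> k" by simp
    then show False using kv vn by simp
  qed
  have N_eq: "closed_nbhd B E x = {b\<in>B. b \<inter> x \<noteq> {}}" if "x \<in> B" for x
    using that nonemp[OF that] unfolding closed_nbhd_def adj_iff by auto
  have one_col: "card {b\<in>{b\<in>B. c b = j}. b \<inter> x \<noteq> {}} = 1" if x: "x \<in> I" and j: "j < r + 1" for x j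
  proof -
    have xB: "x \<in> B" using x IB by blast
    define N where "N = closed_nbhd B E x"
    have finN: "finite N" unfolding N_def closed_nbhd_def using finB by simp
    have "x \<notin> {y\<in>B. E x y}" using adj_iff by simp
    then have cN: "card N = r + 1"
      unfolding N_def closed_nbhd_def using reg xB finB unfolding regular_graph_def by simp
    have im: "c ` N = {..<r+1}" using rb x unfolding rainbow_def N_def by blast
    have inj: "inj_on c N" by (rule eq_card_imp_inj_on[OF finN]) (simp add: im cN)
    obtain b0 where b0: "b0 \<in> N" "c b0 = j" using im j by (metis imageE lessThan_iff)
    have "{b\<in>{b\<in>B. c b = j}. b \<inter> x \<noteq> {}} = {b0}"
    proof -
      have "{b\<in>{b\<in>B. c b = j}. b \<inter> x \<noteq> {}} = {b\<in>N. c b = j}"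
        using N_eq[OF xB] unfolding N_def by auto
      also have "\<dots> = {b0}" using b0 inj unfolding inj_on_def by auto
      finally show ?thesis .
    qed
    then show ?thesis by simp
  qed
  have meet_k: "card {x\<in>I. b \<inter> x \<noteq> {}} = k" if b: "b \<in> B" "b \<notin> I" for b
  proof -
    define I' where "I' = {x\<in>I. b \<inter> x \<noteq> {}}"
    have finI': "finite I'" using finI I'_def by simp
    have "b = (\<Union>x\<in>I'. b \<inter> x)" using UI blk[OF b(1)] unfolding I'_def by blast
    then have "card b = (\<Sum>x\<in>I'. card (b \<inter> x))"
      using card_UN_disjoint[OF finI', of "\<lambda>x. b \<inter> x"] finb[OF b(1)] Idisj
      unfolding I'_def by auto
    also have "\<dots> = (\<Sum>x\<in>I'. 1)"
    proof (rule sum.cong)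
      fix x assume x: "x \<in> I'"
      then have "x \<in> B" "x \<noteq> b" using IB b unfolding I'_def by auto
      then have "card (b \<inter> x) \<le> 1" using inter_le b by blast
      moreover have "card (b \<inter> x) \<noteq> 0" using x finb[OF b(1)] unfolding I'_def by auto
      ultimately show "card (b \<inter> x) = 1" by simp
    qed simp
    finally show ?thesis using blk[OF b(1)] unfolding I'_def by simp
  qed
  have rn: "n \<le> r"
  proof -
    obtain x where x: "x \<in> I" using cI n2 by (metis card.empty ex_in_conv not_numeral_le_zero)
    have xB: "x \<in> B" using x IB by blast
    obtain p1 p2 where p: "p1 \<in> x" "p2 \<in> x" "p1 \<noteq> p2"
      using two_elems[of x] finb[OF xB] blk[OF xB] k2 by auto
    define S where "S p = {b\<in>B. p \<in> b \<and> b \<noteq> x}" for p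
    have Sbound: "n - 1 \<le> card (S p)" if p: "p \<in> x" for p
    proof -
      have cov: "V - x \<subseteq> \<Union>(S p)"
      proof
        fix q assume q: "q \<in> V - x"
        have "p \<in> V" using p blk[OF xB] by blast
        moreover have "q \<noteq> p" using q p by blast
        ultimately have "card {b\<in>B. {p, q} \<subseteq> b} = 1" using pair q by auto
        then obtain b where "b \<in> B" "{p, q} \<subseteq> b" by (metis (no_types, lifting) card_1_singletonE mem_Collect_eq singletonI)
        then show "q \<in> \<Union>(S p)" using q unfolding S_def by blast
      qed
      have finS: "finite (S p)" using finB S_def by simp
      have "card (V - x) \<le> card (\<Union>(S p))"
        by (rule card_mono) (use finS finb S_def cov in auto)
      also have "\<dots> \<le> sum card (S p)" by (rule card_Union_le_sum_card)
      also have "\<dots> = sum (\<lambda>_. k) (S p)" using blk S_def by (intro sum.cong) auto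
      finally have "card V - k \<le> k * card (S p)"
        using card_Diff_subset[of x V] finb[OF xB] blk[OF xB] by (simp add: mult.commute)
      moreover have "card V - k = k * (n - 1)" using vn by (simp add: right_diff_distrib')
      ultimately have "k * (n - 1) \<le> k * card (S p)" by simp
      then show ?thesis using k2 by simp
    qed
    have d: "S p1 \<inter> S p2 = {}"
    proof (rule ccontr)
      assume "S p1 \<inter> S p2 \<noteq> {}"
      then obtain b where b: "b \<in> B" "p1 \<in> b" "p2 \<in> b" "b \<noteq> x" unfolding S_def by blast
      have c1: "card (b \<inter> x) \<le> 1" using inter_le b xB by blast
      have "{p1, p2} \<subseteq> b \<inter> x" using b p by blast
      then have "card {p1, p2} \<le> card (b \<inter> x)" using finb[OF xB] by (intro card_mono) auto
      then show False using p c1 by simp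
    qed
    have sub: "S p1 \<union> S p2 \<subseteq> {y\<in>B. E x y}" unfolding S_def adj_iff using xB p by blast
    have "card (S p1) + card (S p2) = card (S p1 \<union> S p2)"
      using d finB S_def by (simp add: card_Un_disjoint)
    also have "\<dots> \<le> card {y\<in>B. E x y}" by (rule card_mono) (use finB sub in auto)
    also have "\<dots> = r" using reg xB unfolding regular_graph_def by blast
    finally show ?thesis using Sbound[OF p(1)] Sbound[OF p(2)] n2 by linarith
  qed
  have "card (c ` I) \<le> n" using card_image_le[OF finI] cI by simp
  then have "card (c ` I) < card {..<r+1}" using rn by simp
  moreover have "finite (c ` I)" using finI by simp
  ultimately have "\<not> {..<r+1} \<subseteq> c ` I" using card_mono not_le by metis
  then obtain j where j: "j \<in> {..<r+1}" "j \<notin> c ` I" by blast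
  define C where "C = {b\<in>B. c b = j}"
  have finC: "finite C" using finB C_def by simp
  have "sum (\<lambda>x. card {b\<in>C. b \<inter> x \<noteq> {}}) I = k * card C"
    by (rule sum_multicount[OF finI finC]) (use meet_k j C_def in auto)
  moreover have "sum (\<lambda>x. card {b\<in>C. b \<inter> x \<noteq> {}}) I = sum (\<lambda>_. 1) I"
    using one_col j unfolding C_def by (intro sum.cong) auto
  ultimately have "n = k * card C" using cI by simp
  then have "card V = k ^ 2 * card C" using vn by (simp add: power2_eq_square)
  then show ?thesis by simp
qed

end
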